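(* Let $v\in\mathbb{N}$ and $n=2^a$ for some $a\in\mathbb{Z}^+$. Define rational polynomials $y_v(k)$ by $y_0(k)=-\tfrac12$ and, for $v\ge1$, $y_v(k)=-\tfrac12(2k+3)^{2v}+\sum_{j=1}^{v}e_j^{(2v)}y_{v-j}(k)$; and $\tilde y_v(k)$ by $\tilde y_0(k)=\tfrac14$ and, for $v\ge1$, $\tilde y_v(k)=\tfrac14(2k+3)^{2v}-\sum_{j=1}^{v}\tfrac{e_j^{(2v)}}{2}\tilde y_{v-j}(k)$. Put $$\rho_v=1-2\sum_{j=1}^{v}e_j^{(2v)}y_{v-j}(-1),\qquad \tilde\rho_v=2v-\sum_{j=1}^{v}e_j^{(2v)}\tilde y_{v-j}'(-1),$$ where $'$ denotes the derivative in $k$. Then $\rho_v$ is an odd integer, $\tilde\rho_v$ is an even integer (both independent of $n$), and $$\sum_{k=0}^{n-1}(2k+1)^{2v+1}D_k\equiv \rho_v n\pmod{n^3},\qquad \sum_{k=0}^{n-1}(-1)^k(2k+1)^{2v+1}D_k\equiv \tilde\rho_v n^2\pmod{n^3}.$$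
   Context: $D_n=\sum_{k=0}^{n}\binom{n}{k}\binom{n+k}{k}$ are the central Delannoy numbers. For $s\in\mathbb{N}$ and $1\le j\le\lfloor (s+1)/2\rfloor$, $e_j^{(s)}=\binom{s}{2j}2^{2j-1}+\binom{s}{2j-1}2^{2j-2}$ (these are even integers when $s$ is even). *)

theory Defs
  imports "HOL-Computational_Algebra.Polynomial"
begin

definition delannoy :: "nat \<Rightarrow> nat" where
  "delannoy n = (\<Sum>k=0..n. (n choose k) * ((n + k) choose k))"

text \<open>The coefficients e_j^{(s)}, used only for j >= 1.\<close>
definition ecoef :: "nat \<Rightarrow> nat \<Rightarrow> nat" where
  "ecoef s j = (s choose (2*j)) * 2^(2*j - 1) + (s choose (2*j - 1)) * 2^(2*j - 2)"

text \<open>The rational polynomials y_v(k) in the variable k (here [:3,2:] = 2k+3).\<close>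
function ypoly :: "nat \<Rightarrow> rat poly" where
  "ypoly v = (if v = 0 then [:-1/2:]
     else smult (-1/2) ([:3, 2:] ^ (2*v))
          + (\<Sum>j=1..v. smult (of_nat (ecoef (2*v) j)) (ypoly (v - j))))"
  by auto
termination by (relation "measure id") auto

function ytpoly :: "nat \<Rightarrow> rat poly" where
  "ytpoly v = (if v = 0 then [:1/4:]
     else smult (1/4) ([:3, 2:] ^ (2*v))
          - (\<Sum>j=1..v. smult (of_nat (ecoef (2*v) j) / 2) (ytpoly (v - j))))"
  by auto
termination by (relation "measure id") auto

definition rho :: "nat \<Rightarrow> rat" where
  "rho v = 1 - 2 * (\<Sum>j=1..v. of_nat (ecoef (2*v) j) * poly (ypoly (v - j)) (-1))"

definition rhot :: "nat \<Rightarrow> rat" where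
  "rhot v = 2 * of_nat v - (\<Sum>j=1..v. of_nat (ecoef (2*v) j) * poly (pderiv (ytpoly (v - j))) (-1))"

end

theory Submission
  imports Defs
begin



declare ypoly.simps[simp del] ytpoly.simps[simp del]

lemma pderiv_sum': "pderiv (\<Sum>x\<in>A. f x) = (\<Sum>x\<in>A. pderiv (f x))"
  using higher_pderiv_sum[of 1 f A] by simp

lemma poly_y: "v > 0 \<Longrightarrow> poly (ypoly v) (-1) = -1/2 + (\<Sum>j=1..v. of_nat (ecoef (2*v) j) * poly (ypoly (v-j)) (-1))"
  by (subst ypoly.simps) (simp add: poly_sum)

lemma rho_eq: "rho v = -2 * poly (ypoly v) (-1)"
proof (cases "v = 0")
  case True then show ?thesis by (simp add: rho_def ypoly.simps)
next
  case False then show ?thesis by (simp add: rho_def poly_y algebra_simps)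
qed

lemma rho_rec: "rho v = 1 + (\<Sum>j=1..v. of_nat (ecoef (2*v) j) * rho (v-j))"
proof -
  have h: "\<And>w. poly (ypoly w) (-1) = - rho w / 2" using rho_eq by simp
  have "rho v = 1 - 2 * (\<Sum>j=1..v. of_nat (ecoef (2*v) j) * poly (ypoly (v - j)) (-1))"
    by (rule rho_def)
  also have "\<dots> = 1 + (\<Sum>j=1..v. of_nat (ecoef (2*v) j) * rho (v-j))"
    by (simp only: h sum_distrib_left) (simp add: sum_negf)
  finally show ?thesis .
qed

lemma pd_pow: "v > 0 \<Longrightarrow> poly (pderiv ([:3, 2:] ^ (2*v))) (-1 :: rat) = 4 * of_nat v"
proof -
  assume "v > 0"
  then obtain m where m: "2*v = Suc m" by (cases v) auto
  have "poly (pderiv ([:3, 2:] ^ (2*v))) (-1 :: rat) = of_nat (Suc m) * 2"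
    unfolding m pderiv_power_Suc by (simp add: pderiv_pCons)
  also have "of_nat (Suc m) = (of_nat (2*v) :: rat)" using m by simp
  finally show ?thesis by simp
qed

lemma poly_yt: "v > 0 \<Longrightarrow> poly (pderiv (ytpoly v)) (-1) = of_nat v - (\<Sum>j=1..v. of_nat (ecoef (2*v) j) / 2 * poly (pderiv (ytpoly (v-j))) (-1))"
  by (subst ytpoly.simps) (simp add: poly_sum pderiv_sum' pderiv_diff pderiv_smult pd_pow)

lemma rhot_eq: "rhot v = 2 * poly (pderiv (ytpoly v)) (-1)"
proof (cases "v = 0")
  case True then show ?thesis by (simp add: rhot_def ytpoly.simps)
next
  case False then show ?thesis by (simp add: rhot_def poly_yt algebra_simps sum_distrib_left)
qed

lemma rhot_rec: "rhot v = 2 * of_nat v - (\<Sum>j=1..v. of_nat (ecoef (2*v) j) / 2 * rhot (v-j))"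
proof -
  have h: "\<And>w. poly (pderiv (ytpoly w)) (-1) = rhot w / 2" using rhot_eq by simp
  have "rhot v = 2 * of_nat v - (\<Sum>j=1..v. of_nat (ecoef (2*v) j) * poly (pderiv (ytpoly (v - j))) (-1))"
    by (rule rhot_def)
  also have "\<dots> = 2 * of_nat v - (\<Sum>j=1..v. of_nat (ecoef (2*v) j) / 2 * rhot (v-j))"
    by (simp only: h) (simp add: algebra_simps)
  finally show ?thesis .
qed



lemma poch_zero: "m < N \<Longrightarrow> pochhammer (- of_nat m) N = (0::int)"
proof -
  assume "m < N"
  then obtain r where "N = Suc (m + r)" using less_imp_Suc_add by blast
  then have N: "N = m + Suc r" by simp
  show ?thesis unfolding N pochhammer_product' by (simp add: pochhammer_rec)
qed

definition tt :: "nat \<Rightarrow> nat \<Rightarrow> int" where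
  "tt k j = int ((k choose j) * ((k + j) choose j))"

lemma t_poch: "tt k j * (fact j)^2 = pochhammer (int k - int j + 1) (2*j)"
proof (cases "j \<le> k")
  case True
  have f1: "fact j * fact (k-j) * (k choose j) = fact k" using binomial_fact_lemma[OF True] .
  have f2: "fact j * fact k * ((k+j) choose j) = fact (k+j)"
    using binomial_fact_lemma[of j "k+j"] by simp
  have f3: "(fact (k+j) :: int) = fact (k-j) * pochhammer (int (k-j) + 1) (2*j)"
  proof -
    have eq: "(k - j) + 2*j = k + j" using True by simp
    have "(fact (k+j) :: int) = pochhammer 1 ((k - j) + 2*j)" unfolding eq by (simp add: pochhammer_fact)
    also have "\<dots> = pochhammer 1 (k-j) * pochhammer (1 + of_nat (k-j)) (2*j)"
      by (rule pochhammer_product')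
    also have "\<dots> = fact (k-j) * pochhammer (int (k-j) + 1) (2*j)"
      by (simp add: pochhammer_fact add.commute)
    finally show ?thesis .
  qed
  have f1': "(fact j * fact (k-j) * int (k choose j) :: int) = fact k"
    using arg_cong[OF f1, of int] by (simp add: of_nat_fact)
  have f2': "(fact j * fact k * int ((k+j) choose j) :: int) = fact (k+j)"
    using arg_cong[OF f2, of int] by (simp add: of_nat_fact)
  have "(tt k j * (fact j)^2) * (fact k * fact (k-j)) = (fact j * fact (k-j) * int (k choose j)) * (fact j * fact k * int ((k+j) choose j))"
    by (simp add: tt_def power2_eq_square algebra_simps)
  also have "\<dots> = fact k * fact (k+j)" using f1' f2' by simp
  also have "\<dots> = pochhammer (int k - int j + 1) (2*j) * (fact k * fact (k-j))"
    using f3 True by (simp add: of_nat_diff algebra_simps)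
  finally show ?thesis by (simp add: fact_nonzero)
next
  case False
  then have e: "int k - int j + 1 = - of_nat (j - k - 1)" by simp
  have "j - k - 1 < 2*j" using False by arith
  then have "pochhammer (int k - int j + 1) (2*j) = 0" unfolding e by (rule poch_zero)
  moreover have "tt k j = 0" using False by (simp add: tt_def)
  ultimately show ?thesis by simp
qed

lemma wz:
  assumes "k \<ge> 1"
  shows "(int k + 1) * tt (k+1) (Suc i) - (2 * int k + 1) * tt k (Suc i) + int k * tt (k-1) (Suc i)
         = 2 * (2 * int k + 1) * tt k i"
proof -
  define c where "c = int k - int i"
  define g where "g = pochhammer (c + 1) (2*i)"
  have e1: "tt (k+1) (Suc i) * (fact (Suc i))^2 = g * (c + 1 + 2 * int i) * (c + 2 + 2 * int i)"
  proof -
    have "tt (k+1) (Suc i) * (fact (Suc i))^2 = pochhammer (int (k+1) - int (Suc i) + 1) (2 * Suc i)"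
      by (rule t_poch)
    also have "int (k+1) - int (Suc i) + 1 = c + 1" by (simp add: c_def)
    also have "2 * Suc i = Suc (Suc (2*i))" by simp
    also have "pochhammer (c + 1) (Suc (Suc (2*i))) = g * (c + 1 + 2 * int i) * (c + 2 + 2 * int i)"
      by (simp only: pochhammer_Suc g_def) (simp add: algebra_simps)
    finally show ?thesis .
  qed
  have e2: "tt k (Suc i) * (fact (Suc i))^2 = c * g * (c + 1 + 2 * int i)"
  proof -
    have "tt k (Suc i) * (fact (Suc i))^2 = pochhammer (int k - int (Suc i) + 1) (2 * Suc i)"
      by (rule t_poch)
    also have "int k - int (Suc i) + 1 = c" by (simp add: c_def)
    also have "2 * Suc i = Suc (Suc (2*i))" by simp
    also have "pochhammer c (Suc (Suc (2*i))) = c * pochhammer (c + 1) (Suc (2*i))"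
      by (rule pochhammer_rec)
    also have "pochhammer (c + 1) (Suc (2*i)) = g * (c + 1 + 2 * int i)"
      unfolding g_def by (simp add: pochhammer_Suc algebra_simps)
    also have "c * (g * (c + 1 + 2 * int i)) = c * g * (c + 1 + 2 * int i)" by simp
    finally show ?thesis .
  qed
  have e3: "tt (k-1) (Suc i) * (fact (Suc i))^2 = (c - 1) * c * g"
  proof -
    have "tt (k-1) (Suc i) * (fact (Suc i))^2 = pochhammer (int (k-1) - int (Suc i) + 1) (2 * Suc i)"
      by (rule t_poch)
    also have "int (k-1) - int (Suc i) + 1 = c - 1" using assms by (simp add: c_def of_nat_diff)
    also have "2 * Suc i = Suc (Suc (2*i))" by simp
    also have "pochhammer (c - 1) (Suc (Suc (2*i))) = (c - 1) * pochhammer c (Suc (2*i))"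
      using pochhammer_rec[of "c - 1" "Suc (2*i)"] by simp
    also have "pochhammer c (Suc (2*i)) = c * g"
      unfolding g_def by (rule pochhammer_rec)
    also have "(c - 1) * (c * g) = (c - 1) * c * g" by simp
    finally show ?thesis .
  qed
  have e4: "tt k i * (fact (Suc i))^2 = (int i + 1)^2 * g"
  proof -
    have "tt k i * (fact (Suc i))^2 = (int i + 1)^2 * (tt k i * (fact i)^2)"
      by (simp add: algebra_simps power2_eq_square)
    also have "tt k i * (fact i)^2 = g" unfolding g_def c_def by (simp add: t_poch)
    finally show ?thesis .
  qed
  have key: "(int k + 1) * (g * (c + 1 + 2 * int i) * (c + 2 + 2 * int i)) - (2 * int k + 1) * (c * g * (c + 1 + 2 * int i))
      + int k * ((c - 1) * c * g) = 2 * (2 * int k + 1) * ((int i + 1)^2 * g)"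
    unfolding c_def by (simp add: algebra_simps power2_eq_square)
  define F where "F = (fact (Suc i) :: int)^2"
  have "((int k + 1) * tt (k+1) (Suc i) - (2 * int k + 1) * tt k (Suc i) + int k * tt (k-1) (Suc i)) * F
      = (int k + 1) * (tt (k+1) (Suc i) * F) - (2 * int k + 1) * (tt k (Suc i) * F) + int k * (tt (k-1) (Suc i) * F)"
    by (simp add: algebra_simps)
  also have "\<dots> = 2 * (2 * int k + 1) * (tt k i * F)"
    unfolding F_def e1 e2 e3 e4 by (rule key)
  finally have "((int k + 1) * tt (k+1) (Suc i) - (2 * int k + 1) * tt k (Suc i) + int k * tt (k-1) (Suc i)) * F
      = (2 * (2 * int k + 1) * tt k i) * F" by simp
  moreover have "F \<noteq> 0" unfolding F_def by simp
  ultimately show ?thesis by (metis mult_cancel_right)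
qed

lemma D_sum: "m < N \<Longrightarrow> int (delannoy m) = (\<Sum>j<N. tt m j)"
proof -
  assume mN: "m < N"
  have "int (delannoy m) = (\<Sum>j<Suc m. tt m j)"
    by (simp add: delannoy_def tt_def atLeast0AtMost lessThan_Suc_atMost)
  also have "\<dots> = (\<Sum>j<N. tt m j)"
    by (rule sum.mono_neutral_left) (use mN in \<open>auto simp: tt_def\<close>)
  finally show ?thesis .
qed

abbreviation DD :: "nat \<Rightarrow> int" where "DD k \<equiv> int (delannoy k)"

lemma drec:
  assumes "k \<ge> 1"
  shows "(int k + 1) * DD (k+1) = 3 * (2 * int k + 1) * DD k - int k * DD (k-1)"
proof -
  define f where "f j = (int k + 1) * tt (k+1) j - (2 * int k + 1) * tt k j + int k * tt (k-1) j" for j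
  have "(\<Sum>j<Suc (k+1). f j) = f 0 + (\<Sum>j<k+1. f (Suc j))" by (rule sum.lessThan_Suc_shift)
  also have "f 0 = 0" by (simp add: f_def tt_def)
  also have "(\<Sum>j<k+1. f (Suc j)) = 2 * (2 * int k + 1) * (\<Sum>j<k+1. tt k j)"
  proof -
    have "\<And>j. f (Suc j) = 2 * (2 * int k + 1) * tt k j" using wz[OF assms] by (simp add: f_def)
    then show ?thesis by (simp only: sum_distrib_left)
  qed
  also have "(\<Sum>j<k+1. tt k j) = DD k" by (subst D_sum[of k "k+1"]) auto
  finally have 1: "(\<Sum>j<k+2. f j) = 2 * (2 * int k + 1) * DD k" by simp
  have "(\<Sum>j<k+2. f j) = (int k + 1) * (\<Sum>j<k+2. tt (k+1) j) - (2 * int k + 1) * (\<Sum>j<k+2. tt k j) + int k * (\<Sum>j<k+2. tt (k-1) j)"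
    by (simp only: f_def sum.distrib sum_subtractf sum_distrib_left)
  also have "\<dots> = (int k + 1) * DD (k+1) - (2 * int k + 1) * DD k + int k * DD (k-1)"
  proof -
    have h1: "DD (k+1) = (\<Sum>j<k+2. tt (k+1) j)" by (rule D_sum) simp
    have h2: "DD k = (\<Sum>j<k+2. tt k j)" by (rule D_sum) simp
    have h3: "DD (k-1) = (\<Sum>j<k+2. tt (k-1) j)" by (rule D_sum) simp
    show ?thesis by (simp only: h1 h2 h3)
  qed
  finally show ?thesis using 1 by (simp add: algebra_simps)
qed

lemma D0: "DD 0 = 1" by (simp add: delannoy_def)
lemma D1: "DD 1 = 3" by (simp add: delannoy_def numeral_3_eq_3)
lemma D1': "delannoy (Suc 0) = 3" by (simp add: delannoy_def numeral_3_eq_3)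

lemma tel1:
  fixes a :: "nat \<Rightarrow> int"
  shows "(\<Sum>k<Suc n. (3 * (2 * int k + 1) * a (k+1) - (int k + 1) * a (k+2) - int k * a k) * DD k)
         = (int n + 1) * (a (n+1) * DD (n+1) - a (n+2) * DD n)"
proof (induction n)
  case 0
  show ?case by (simp add: D0 D1 D1')
next
  case (Suc n)
  have r: "(int n + 2) * DD (n+2) = 3 * (2 * int n + 3) * DD (n+1) - (int n + 1) * DD n"
    using drec[of "Suc n"] by (simp add: algebra_simps)
  have "(\<Sum>k<Suc (Suc n). (3 * (2 * int k + 1) * a (k+1) - (int k + 1) * a (k+2) - int k * a k) * DD k)
      = (int n + 1) * (a (n+1) * DD (n+1) - a (n+2) * DD n)
        + (3 * (2 * int n + 3) * a (n+2) - (int n + 2) * a (Suc n + 2) - (int n + 1) * a (n+1)) * DD (n+1)"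
    using Suc by (simp add: algebra_simps numeral_3_eq_3)
  also have "\<dots> = a (n+2) * (3 * (2 * int n + 3) * DD (n+1) - (int n + 1) * DD n) - (int n + 2) * a (Suc n + 2) * DD (n+1)"
    by (simp add: algebra_simps)
  also have "\<dots> = a (n+2) * ((int n + 2) * DD (n+2)) - (int n + 2) * a (Suc n + 2) * DD (n+1)"
    by (simp only: r)
  also have "\<dots> = (int (Suc n) + 1) * (a (Suc n + 1) * DD (Suc n + 1) - a (Suc n + 2) * DD (Suc n))"
    by (simp add: algebra_simps)
  finally show ?case .
qed

lemma tel2:
  fixes a :: "nat \<Rightarrow> int"
  shows "(\<Sum>k<Suc n. (-1)^(k+1) * (3 * (2 * int k + 1) * a (k+1) + (int k + 1) * a (k+2) + int k * a k) * DD k)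
         = (-1)^(n+1) * (int n + 1) * (a (n+1) * DD (n+1) + a (n+2) * DD n)"
proof (induction n)
  case 0
  show ?case by (simp add: D0 D1 D1')
next
  case (Suc n)
  have r: "(int n + 2) * DD (n+2) = 3 * (2 * int n + 3) * DD (n+1) - (int n + 1) * DD n"
    using drec[of "Suc n"] by (simp add: algebra_simps)
  define s :: int where "s = (-1)^(n+1)"
  have "(\<Sum>k<Suc (Suc n). (-1)^(k+1) * (3 * (2 * int k + 1) * a (k+1) + (int k + 1) * a (k+2) + int k * a k) * DD k)
      = s * (int n + 1) * (a (n+1) * DD (n+1) + a (n+2) * DD n)
        - s * (3 * (2 * int n + 3) * a (n+2) + (int n + 2) * a (Suc n + 2) + (int n + 1) * a (n+1)) * DD (n+1)"
    using Suc by (simp add: algebra_simps s_def numeral_3_eq_3)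
  also have "\<dots> = - s * (a (n+2) * (3 * (2 * int n + 3) * DD (n+1) - (int n + 1) * DD n) + (int n + 2) * a (Suc n + 2) * DD (n+1))"
    by (simp add: algebra_simps)
  also have "\<dots> = - s * (a (n+2) * ((int n + 2) * DD (n+2)) + (int n + 2) * a (Suc n + 2) * DD (n+1))"
    by (simp only: r)
  also have "\<dots> = (-1)^(Suc n+1) * (int (Suc n) + 1) * (a (Suc n + 1) * DD (Suc n + 1) + a (Suc n + 2) * DD (Suc n))"
    by (simp add: algebra_simps s_def)
  finally show ?case .
qed



lemma parity_split:
  fixes f :: "nat \<Rightarrow> 'a::comm_monoid_add"
  shows "(\<Sum>i\<le>2*v. f i) = (\<Sum>j\<le>v. f (2*j)) + (\<Sum>j=1..v. f (2*j-1))"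
proof (induction v)
  case 0 then show ?case by simp
next
  case (Suc v)
  have "(\<Sum>i\<le>2*Suc v. f i) = (\<Sum>i\<le>2*v. f i) + f (2*v+1) + f (2*v+2)"
    by (simp add: add.assoc)
  also have "\<dots> = ((\<Sum>j\<le>v. f (2*j)) + f (2*Suc v)) + ((\<Sum>j=1..v. f (2*j-1)) + f (2*Suc v - 1))"
    using Suc by (simp add: algebra_simps)
  also have "\<dots> = (\<Sum>j\<le>Suc v. f (2*j)) + (\<Sum>j=1..Suc v. f (2*j-1))"
    by simp
  finally show ?case .
qed

lemma e_identity:
  fixes x :: int
  shows "(x+1)*(x+2)^(2*v) + (x-1)*(x-2)^(2*v)
         = 2*x^(2*v+1) + 4*(\<Sum>j=1..v. int (ecoef (2*v) j) * x^(2*(v-j)+1))"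
proof -
  define s where "s = 2*v"
  define f where "f i = int (s choose i) * x^(s-i) * ((x+1)*2^i + (x-1)*(-2)^i)" for i
  have p1: "(x+2)^s = (\<Sum>i\<le>s. int (s choose i) * 2^i * x^(s-i))"
    using binomial_ring[of "2::int" x s] by (simp add: add.commute)
  have p2: "(x-2)^s = (\<Sum>i\<le>s. int (s choose i) * (-2)^i * x^(s-i))"
    using binomial_ring[of "-2::int" x s] by (simp add: add.commute)
  have "(x+1)*(x+2)^s + (x-1)*(x-2)^s = (\<Sum>i\<le>s. f i)"
    unfolding p1 p2 f_def by (simp add: sum_distrib_left sum.distrib[symmetric] algebra_simps)
  also have "\<dots> = (\<Sum>j\<le>v. f (2*j)) + (\<Sum>j=1..v. f (2*j-1))"
    unfolding s_def by (rule parity_split)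
  also have "(\<Sum>j\<le>v. f (2*j)) = f 0 + (\<Sum>j=1..v. f (2*j))"
    by (simp add: atMost_atLeast0 sum.atLeast_Suc_atMost)
  also have "f 0 = 2 * x^(2*v+1)"
    by (simp add: f_def s_def algebra_simps)
  also have "2 * x^(2*v+1) + (\<Sum>j=1..v. f (2*j)) + (\<Sum>j=1..v. f (2*j-1)) = 2 * x^(2*v+1) + 4*(\<Sum>j=1..v. int (ecoef (2*v) j) * x^(2*(v-j)+1))"
  proof -
    have "f (2*j) + f (2*j-1) = 4 * (int (ecoef (2*v) j) * x^(2*(v-j)+1))" if j: "j \<in> {1..v}" for j
    proof -
      obtain m where m: "j = Suc m" using j by (cases j) auto
      have ex1: "s - 2*j = 2*(v-j)" by (simp add: s_def)
      have ex2: "s - (2*j-1) = 2*(v-j)+1" using j unfolding s_def by auto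
      have "f (2*j) = int (s choose (2*j)) * x^(2*(v-j)) * (2 * x * 2^(2*j))"
        unfolding f_def ex1 by (simp add: algebra_simps)
      moreover have "f (2*j-1) = int (s choose (2*j-1)) * x^(2*(v-j)+1) * (2 * 2^(2*j-1))"
      proof -
        have "odd (2*j-1)" using j by simp
        then have "(-2::int)^(2*j-1) = - (2^(2*j-1))" by (simp add: power_minus_odd)
        then show ?thesis unfolding f_def ex2 by (simp add: algebra_simps)
      qed
      moreover have "int (ecoef (2*v) j) = int (s choose (2*j)) * 2^(2*j-1) + int (s choose (2*j-1)) * 2^(2*j-2)"
        by (simp add: ecoef_def s_def)
      moreover have "(2::int)^(2*j) = 4 * 2^(2*j-2)" "(2::int)^(2*j-1) = 2 * 2^(2*j-2)"
        using m by (simp_all add: power_Suc)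
      moreover have "(2::int)^(2*j-1) = 2 * 2^(2*j-2)" using m by simp
      ultimately show ?thesis by (simp add: algebra_simps)
    qed
    then show ?thesis by (simp add: add.assoc sum.distrib[symmetric] sum_distrib_left)
  qed
  finally show ?thesis by (simp add: s_def add.assoc)
qed



lemma inner_sum:
  assumes "j \<le> m"
  shows "(\<Sum>k\<le>m. (m choose k) * (k choose j)) = (m choose j) * 2^(m-j)"
proof -
  have "(\<Sum>k\<le>m. (m choose k) * (k choose j)) = (\<Sum>k\<le>m. if j \<le> k then (m choose j) * ((m - j) choose (k - j)) else 0)"
    by (rule sum.cong) (auto simp: choose_mult)
  also have "\<dots> = (\<Sum>k\<in>{j..m}. (m choose j) * ((m - j) choose (k - j)))"
    by (simp add: sum.If_cases atMost_atLeast0 Int_def) (rule sum.cong, auto)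
  also have "\<dots> = (\<Sum>i\<in>{0..m-j}. (m choose j) * ((m - j) choose i))"
  proof -
    have "{j..m} = {0 + j..(m - j) + j}" using assms by simp
    then show ?thesis by (simp only: sum.shift_bounds_cl_nat_ivl) simp
  qed
  also have "\<dots> = (m choose j) * 2^(m-j)"
    by (simp add: sum_distrib_left[symmetric] atMost_atLeast0[symmetric] choose_row_sum)
  finally show ?thesis .
qed

lemma delannoy_sq: "delannoy m = (\<Sum>k\<le>m. (m choose k)^2 * 2^k)"
proof -
  have "delannoy m = (\<Sum>k\<le>m. (m choose k) * ((m + k) choose k))"
    by (simp add: delannoy_def atMost_atLeast0)
  also have "\<dots> = (\<Sum>k\<le>m. \<Sum>j\<le>m. (m choose k) * (m choose j) * (k choose j))"
  proof (rule sum.cong[OF refl])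
    fix k assume k: "k \<in> {..m}"
    have "(m + k) choose k = (\<Sum>j\<le>k. (m choose j) * (k choose (k - j)))"
      using vandermonde[of m k k] by simp
    also have "\<dots> = (\<Sum>j\<le>k. (m choose j) * (k choose j))"
      by (rule sum.cong) (auto simp: binomial_symmetric[symmetric])
    also have "\<dots> = (\<Sum>j\<le>m. (m choose j) * (k choose j))"
      by (rule sum.mono_neutral_left) (use k in auto)
    finally show "(m choose k) * ((m + k) choose k) = (\<Sum>j\<le>m. (m choose k) * (m choose j) * (k choose j))"
      by (simp add: sum_distrib_left mult.assoc)
  qed
  also have "\<dots> = (\<Sum>j\<le>m. (m choose j) * (\<Sum>k\<le>m. (m choose k) * (k choose j)))"
    by (subst sum.swap) (simp add: sum_distrib_left mult_ac)
  also have "\<dots> = (\<Sum>j\<le>m. (m choose j)^2 * 2^(m-j))"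
    by (rule sum.cong) (auto simp: inner_sum power2_eq_square)
  also have "\<dots> = (\<Sum>k\<le>m. (m choose k)^2 * 2^k)"
  proof -
    have "(\<Sum>j\<in>{0..m}. (m choose j)^2 * 2^(m-j)) = (\<Sum>j\<in>{0..m}. (m choose (m + 0 - j))^2 * 2^(m - (m + 0 - j)))"
      by (rule sum.atLeastAtMost_rev)
    also have "\<dots> = (\<Sum>j\<in>{0..m}. (m choose j)^2 * 2^j)"
      by (rule sum.cong) (auto simp: binomial_symmetric[symmetric])
    finally show ?thesis by (simp add: atMost_atLeast0)
  qed
  finally show ?thesis .
qed

lemma two_pow_odd: "k \<ge> 1 \<Longrightarrow> \<exists>q r. k = 2^q * r \<and> odd (r::nat)"
proof (induction k rule: less_induct)
  case (less k)
  show ?case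
  proof (cases "odd k")
    case True then show ?thesis by (rule_tac x=0 in exI) auto
  next
    case False
    then obtain k' where k': "k = 2 * k'" by auto
    with less.prems have "k' < k" "k' \<ge> 1" by auto
    then obtain q r where "k' = 2^q * r" "odd r" using less.IH by blast
    then show ?thesis using k' by (rule_tac x="Suc q" in exI) auto
  qed
qed

lemma pow_ge: "2 * q \<le> (2::nat)^q"
proof (cases q)
  case 0 then show ?thesis by simp
next
  case (Suc p)
  have "p < 2^p" by (rule less_exp)
  then have "Suc (Suc (2 * p)) \<le> 2 * 2 ^ p" by linarith
  then show ?thesis using Suc by simp
qed

lemma vdiv:
  assumes "1 \<le> k"
  shows "\<exists>q. 2^q \<le> k \<and> (2::nat)^a dvd ((2^a choose k) * 2^q)"
proof -
  obtain q r where ko: "k = 2^q * r" "odd r" using two_pow_odd[OF assms] by blast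
  obtain k' where k': "k = Suc k'" using assms by (cases k) auto
  obtain n' where n': "(2::nat)^a = Suc n'" by (metis not0_implies_Suc power_not_zero zero_neq_numeral)
  have "k * (2^a choose k) = 2^a * (n' choose k')"
    unfolding k' n' by (rule Suc_times_binomial)
  then have "(2::nat)^a dvd (2^q * (2^a choose k)) * r" using ko by (simp add: mult_ac)
  moreover have "coprime ((2::nat)^a) r" using ko by simp
  ultimately have "(2::nat)^a dvd 2^q * (2^a choose k)" by (simp add: coprime_dvd_mult_left_iff)
  moreover have "2^q \<le> k" using ko by (cases r) auto
  ultimately show ?thesis by (auto simp: mult.commute)
qed

lemma arith_pq:
  fixes p q l k :: nat
  assumes "2^p \<le> l" "l < k" "2^q \<le> k"
  shows "p + q + 1 \<le> k"
proof (cases "q \<le> p")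
  case True
  have "2*p \<le> 2^p" by (rule pow_ge)
  then show ?thesis using assms True by linarith
next
  case False
  have "2*q \<le> 2^q" by (rule pow_ge)
  then show ?thesis using assms False by linarith
qed


lemma term_div:
  assumes "1 \<le> k"
  shows "(2::nat)^(2*a) dvd ((2^a choose k)^2 * 2^k)"
proof -
  obtain q where q: "2^q \<le> k" "(2::nat)^a dvd ((2^a choose k) * 2^q)" using vdiv[OF assms] by blast
  have "(2::nat)^(2*a) = (2^a)^2" by (simp add: power_mult[symmetric] mult.commute)
  also have "\<dots> dvd ((2^a choose k) * 2^q)^2" using q(2) by (rule dvd_power_same)
  also have "\<dots> = (2^a choose k)^2 * 2^(2*q)" by (simp add: power_mult_distrib power_mult[symmetric] mult.commute)
  also have "\<dots> dvd (2^a choose k)^2 * 2^k"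
  proof (rule mult_dvd_mono)
    have "2*q \<le> k" using pow_ge[of q] q(1) by linarith
    then show "(2::nat)^(2*q) dvd 2^k" by (rule le_imp_power_dvd)
  qed simp
  finally show ?thesis .
qed

lemma Kn:
  assumes "n = 2^a"
  shows "(int n)^2 dvd DD n - 1"
proof -
  have "delannoy n = (\<Sum>k\<in>{0..n}. (n choose k)^2 * 2^k)" by (simp add: delannoy_sq atMost_atLeast0)
  also have "\<dots> = 1 + (\<Sum>k\<in>{Suc 0..n}. (n choose k)^2 * 2^k)" by (simp add: sum.atLeast_Suc_atMost)
  finally have e: "delannoy n = 1 + (\<Sum>k\<in>{Suc 0..n}. (n choose k)^2 * 2^k)" .
  have "(2::nat)^(2*a) dvd (\<Sum>k\<in>{Suc 0..n}. (n choose k)^2 * 2^k)"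
    by (rule dvd_sum) (use assms term_div in auto)
  then have "int ((2::nat)^(2*a)) dvd int (\<Sum>k\<in>{Suc 0..n}. (n choose k)^2 * 2^k)" by (simp only: int_dvd_int_iff)
  moreover have "int ((2::nat)^(2*a)) = (int n)^2" using assms by (simp add: power_mult[symmetric] mult.commute)
  ultimately show ?thesis using e by simp
qed

lemma Gsum_id:
  "DD (Suc m) + DD m = 2 * (\<Sum>i\<le>m. int (m choose i) * int (Suc m choose Suc i) * 2^(Suc i))"
proof -
  define U where "U = (\<Sum>i\<le>m. int (m choose i)^2 * 2^(Suc i))"
  define X where "X = (\<Sum>i\<le>m. int (m choose i) * int (m choose Suc i) * 2^(Suc i))"
  define W where "W = (\<Sum>i\<le>m. int (m choose Suc i)^2 * 2^(Suc i))"
  have dm: "DD m = (\<Sum>k\<le>m. int (m choose k)^2 * 2^k)" by (simp add: delannoy_sq)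
  have "DD (Suc m) = (\<Sum>k\<le>Suc m. int (Suc m choose k)^2 * 2^k)" by (simp add: delannoy_sq)
  also have "\<dots> = 1 + (\<Sum>i\<le>m. int (Suc m choose Suc i)^2 * 2^(Suc i))"
    by (simp only: sum.atMost_Suc_shift) simp
  also have "(\<Sum>i\<le>m. int (Suc m choose Suc i)^2 * 2^(Suc i)) = U + 2 * X + W"
    unfolding U_def X_def W_def
    by (simp add: sum.distrib[symmetric] sum_distrib_left power2_eq_square algebra_simps)
  finally have a: "DD (Suc m) = 1 + (U + 2 * X + W)" .
  have "(\<Sum>k\<le>Suc m. int (m choose k)^2 * 2^k) = DD m" by (simp add: dm)
  moreover have "(\<Sum>k\<le>Suc m. int (m choose k)^2 * 2^k) = 1 + W"
    unfolding W_def by (simp add: sum.atMost_Suc_shift del: sum.atMost_Suc)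
  ultimately have b: "W = DD m - 1" by simp
  have c: "U = 2 * DD m" unfolding U_def dm by (simp add: sum_distrib_left algebra_simps)
  have d: "(\<Sum>i\<le>m. int (m choose i) * int (Suc m choose Suc i) * 2^(Suc i)) = U + X"
    unfolding U_def X_def
    by (simp add: sum.distrib[symmetric] power2_eq_square algebra_simps)
  show ?thesis using a b c d by simp
qed

lemma alt_binom: "int (m choose i) = (\<Sum>l\<le>i. (-1)^(i-l) * int (Suc m choose l))"
proof (induction i)
  case 0 then show ?case by simp
next
  case (Suc i)
  have "(\<Sum>l\<le>Suc i. (-1)^(Suc i-l) * int (Suc m choose l))
      = (\<Sum>l\<le>i. (-1)^(Suc i-l) * int (Suc m choose l)) + int (Suc m choose Suc i)"
    by simp
  also have "(\<Sum>l\<le>i. (-1)^(Suc i-l) * int (Suc m choose l)) = - (\<Sum>l\<le>i. (-1)^(i-l) * int (Suc m choose l))"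
    by (simp add: sum_negf[symmetric] Suc_diff_le)
  also have "int (Suc m choose Suc i) = int (m choose i) + int (m choose Suc i)" by simp
  finally show ?case using Suc by simp
qed

lemma pair_div:
  assumes "1 \<le> l" "l < k"
  shows "(2::nat)^(2*a+1) dvd (2^a choose l) * (2^a choose k) * 2^k"
proof -
  obtain p where p: "2^p \<le> l" "(2::nat)^a dvd ((2^a choose l) * 2^p)" using vdiv[OF assms(1)] by blast
  obtain q where q: "2^q \<le> k" "(2::nat)^a dvd ((2^a choose k) * 2^q)" using vdiv[of k a] assms by auto
  have pq: "p + q + 1 \<le> k" using arith_pq[OF p(1) assms(2) q(1)] .
  have "(2::nat)^(2*a+1) = 2^a * 2^a * 2" by (simp add: power_add mult_2)
  also have "\<dots> dvd ((2^a choose l) * 2^p) * ((2^a choose k) * 2^q) * 2"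
    using p(2) q(2) by (intro mult_dvd_mono) auto
  also have "\<dots> = (2^a choose l) * (2^a choose k) * 2^(p+q+1)" by (simp add: power_add mult_ac)
  also have "\<dots> dvd (2^a choose l) * (2^a choose k) * 2^k"
    using pq by (intro mult_dvd_mono le_imp_power_dvd) auto
  finally show ?thesis .
qed

lemma K2sum:
  assumes "a \<ge> 1" "2^a = Suc m"
  shows "(2::int)^(2*a+1) dvd (\<Sum>i\<le>m. int (m choose i) * int (Suc m choose Suc i) * 2^(Suc i))"
proof -
  define n where "n = Suc m"
  define c where "c i = int (n choose Suc i) * 2^(Suc i)" for i
  have "(\<Sum>i\<le>m. int (m choose i) * int (Suc m choose Suc i) * 2^(Suc i)) = (\<Sum>i\<le>m. int (m choose i) * c i)"
    by (simp add: c_def n_def mult.assoc)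
  also have "\<dots> = (\<Sum>i\<le>m. (-1)^i * c i + (\<Sum>l\<in>{Suc 0..i}. (-1)^(i-l) * int (n choose l) * c i))"
  proof (rule sum.cong[OF refl])
    fix i
    have "int (m choose i) * c i = (\<Sum>l\<in>{0..i}. (-1)^(i-l) * int (n choose l) * c i)"
      by (simp add: alt_binom[of m i] n_def sum_distrib_right atMost_atLeast0)
    also have "\<dots> = (-1)^i * c i + (\<Sum>l\<in>{Suc 0..i}. (-1)^(i-l) * int (n choose l) * c i)"
      by (simp add: sum.atLeast_Suc_atMost)
    finally show "int (m choose i) * c i = (-1)^i * c i + (\<Sum>l\<in>{Suc 0..i}. (-1)^(i-l) * int (n choose l) * c i)" .
  qed
  also have "\<dots> = (\<Sum>i\<le>m. (-1)^i * c i) + (\<Sum>i\<le>m. \<Sum>l\<in>{Suc 0..i}. (-1)^(i-l) * int (n choose l) * c i)"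
    by (rule sum.distrib)
  also have "(\<Sum>i\<le>m. (-1)^i * c i) = 0"
  proof -
    have ev: "even n" using assms unfolding n_def[symmetric] by (metis dvd_power even_numeral le_numeral_extra(2) not_one_le_zero zero_less_iff_neq_zero gr0I)
    have "(1::int) = (-2 + 1)^n" using ev by simp
    also have "\<dots> = (\<Sum>k\<le>n. int (n choose k) * (-2)^k)"
      using binomial_ring[of "-2::int" 1 n] by simp
    also have "\<dots> = 1 + (\<Sum>i\<le>m. int (n choose Suc i) * (-2)^(Suc i))"
      unfolding n_def by (simp only: sum.atMost_Suc_shift) simp
    also have "(\<Sum>i\<le>m. int (n choose Suc i) * (-2)^(Suc i)) = - (\<Sum>i\<le>m. (-1)^i * c i)"
      by (simp add: c_def sum_negf[symmetric] power_minus[of "2::int"] algebra_simps)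
    finally show ?thesis by simp
  qed
  finally have eq: "(\<Sum>i\<le>m. int (m choose i) * int (Suc m choose Suc i) * 2^(Suc i)) = 0 + (\<Sum>i\<le>m. \<Sum>l\<in>{Suc 0..i}. (-1)^(i-l) * int (n choose l) * c i)" .
  have "(2::int)^(2*a+1) dvd (\<Sum>i\<le>m. \<Sum>l\<in>{Suc 0..i}. (-1)^(i-l) * int (n choose l) * c i)"
  proof (intro dvd_sum)
    fix i l assume i: "i \<in> {..m}" and l: "l \<in> {Suc 0..i}"
    have "(2::nat)^(2*a+1) dvd (2^a choose l) * (2^a choose Suc i) * 2^(Suc i)"
      using l by (intro pair_div) auto
    then have "int ((2::nat)^(2*a+1)) dvd int ((2^a choose l) * (2^a choose Suc i) * 2^(Suc i))"
      by (simp only: int_dvd_int_iff)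
    then have "(2::int)^(2*a+1) dvd int (n choose l) * c i"
      by (simp add: c_def n_def assms(2)[symmetric] mult.assoc)
    then show "(2::int)^(2*a+1) dvd (-1)^(i-l) * int (n choose l) * c i"
      by (simp add: mult.assoc)
  qed
  then show ?thesis using eq by simp
qed




lemma ecoef_even: "j \<ge> 1 \<Longrightarrow> even (ecoef (2*v) j)"
proof -
  assume j: "j \<ge> 1"
  have e1: "even ((2*v choose (2*j)) * 2^(2*j-1))" using j by simp
  have e2: "even ((2*v choose (2*j-1)) * 2^(2*j-2))"
  proof (cases "j = 1")
    case True then show ?thesis by simp
  next
    case False then have "j > 1" using j by simp
    then show ?thesis by simp
  qed
  show ?thesis using e1 e2 by (simp add: ecoef_def)
qed

definition hh :: "nat \<Rightarrow> nat \<Rightarrow> int" where "hh v j = int (ecoef (2*v) j) div 2"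

lemma hh_eq: "j \<ge> 1 \<Longrightarrow> int (ecoef (2*v) j) = 2 * hh v j"
  using ecoef_even[of j v] by (auto simp: hh_def elim!: evenE)

function ri :: "nat \<Rightarrow> int" where
  "ri v = (if v = 0 then 1 else 1 + (\<Sum>j=1..v. int (ecoef (2*v) j) * ri (v - j)))"
  by auto
termination by (relation "measure id") auto

function rti :: "nat \<Rightarrow> int" where
  "rti v = (if v = 0 then 0 else 2 * int v - (\<Sum>j=1..v. hh v j * rti (v - j)))"
  by auto
termination by (relation "measure id") auto

declare ri.simps[simp del] rti.simps[simp del]

lemma ri_rec: "ri v = 1 + (\<Sum>j=1..v. int (ecoef (2*v) j) * ri (v - j))"
  by (cases "v = 0") (simp_all add: ri.simps)

lemma rti_rec: "rti v = 2 * int v - (\<Sum>j=1..v. hh v j * rti (v - j))"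
  by (cases "v = 0") (simp_all add: rti.simps)

lemma rho_ri: "rho v = of_int (ri v)"
proof (induction v rule: less_induct)
  case (less v)
  have "rho v = 1 + (\<Sum>j=1..v. of_nat (ecoef (2*v) j) * rho (v-j))" by (rule rho_rec)
  also have "\<dots> = 1 + (\<Sum>j=1..v. of_nat (ecoef (2*v) j) * of_int (ri (v-j)))"
    by (intro arg_cong[where f="\<lambda>x. 1 + x"] sum.cong refl) (simp add: less.IH)
  also have "\<dots> = of_int (ri v)" by (subst ri_rec) simp
  finally show ?case .
qed

lemma odd_ri: "odd (ri v)"
proof -
  have "even (\<Sum>j=1..v. int (ecoef (2*v) j) * ri (v - j))"
    by (intro dvd_sum) (simp add: ecoef_even)
  then show ?thesis by (subst ri_rec) simp
qed

lemma rhot_rti: "rhot v = of_int (rti v)"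
proof (induction v rule: less_induct)
  case (less v)
  have "rhot v = 2 * of_nat v - (\<Sum>j=1..v. of_nat (ecoef (2*v) j) / 2 * rhot (v-j))" by (rule rhot_rec)
  also have "\<dots> = 2 * of_nat v - (\<Sum>j=1..v. of_int (hh v j) * of_int (rti (v-j)))"
  proof (intro arg_cong[where f="\<lambda>x. 2 * of_nat v - x"] sum.cong refl)
    fix j assume j: "j \<in> {1..v}"
    have "(of_nat (ecoef (2*v) j) :: rat) = of_int (int (ecoef (2*v) j))" by simp
    also have "\<dots> = 2 * of_int (hh v j)" using hh_eq[of j v] j by simp
    finally show "of_nat (ecoef (2*v) j) / 2 * rhot (v-j) = of_int (hh v j) * of_int (rti (v-j))"
      using j less.IH[of "v-j"] by simp
  qed
  also have "\<dots> = of_int (rti v)" by (subst rti_rec) simp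
  finally show ?case .
qed

lemma even_rti: "even (rti v)"
proof (induction v rule: less_induct)
  case (less v)
  have "even (\<Sum>j=1..v. hh v j * rti (v - j))"
    by (intro dvd_sum) (use less.IH in auto)
  then show ?case by (subst rti_rec) simp
qed

lemma pw: "\<exists>c. (1 + y)^m = 1 + int m * y + y^2 * (c::int)"
proof (induction m)
  case 0 then show ?case by (rule_tac x=0 in exI) simp
next
  case (Suc m)
  then obtain c where c: "(1 + y)^m = 1 + int m * y + y^2 * c" by blast
  have "(1 + y)^Suc m = 1 + int (Suc m) * y + y^2 * (int m + c + c * y)"
    by (simp add: c algebra_simps power2_eq_square)
  then show ?case by blast
qed

lemma pw_plus: "\<exists>c. (2 * n + 1)^(2*v) = 1 + 4 * int v * n + 4 * n^2 * (c::int)"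
proof -
  obtain c where c: "(1 + 2*n)^(2*v) = 1 + int (2*v) * (2*n) + (2*n)^2 * c" using pw by blast
  show ?thesis by (rule_tac x=c in exI) (use c in \<open>simp add: algebra_simps power2_eq_square\<close>)
qed

lemma pw_minus: "\<exists>c. (2 * n - 1)^(2*v) = 1 - 4 * int v * n + 4 * n^2 * (c::int)"
proof -
  obtain c where c: "(1 + (-2*n))^(2*v) = 1 + int (2*v) * (-2*n) + (-2*n)^2 * c" using pw by blast
  have "(2 * n - 1)^(2*v) = (1 + (-2*n))^(2*v)"
  proof -
    have "(2 * n - 1)^(2*v) = ((2*n-1)^2)^v" by (simp add: power_mult)
    also have "(2*n-1)^2 = (1 + (-2*n))^2" by (simp add: power2_eq_square algebra_simps)
    finally show ?thesis by (simp add: power_mult)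
  qed
  then show ?thesis by (rule_tac x=c in exI) (use c in \<open>simp add: algebra_simps power2_eq_square\<close>)
qed

lemma K12:
  assumes "a \<ge> 1" "n = 2^a"
  shows "4 * (int n)^2 dvd DD n + DD (n-1)" "2 * (int n)^2 dvd DD n - DD (n-1) - 2"
proof -
  have "n \<noteq> 0" using assms(2) by simp
  then obtain m where m: "n = Suc m" using not0_implies_Suc by blast
  define Gs where "Gs = (\<Sum>i\<le>m. int (m choose i) * int (Suc m choose Suc i) * 2^(Suc i))"
  have g: "(2::int)^(2*a+1) dvd Gs" unfolding Gs_def
    by (rule K2sum[OF assms(1)]) (use m assms(2) in simp)
  have n2: "4 * (int n)^2 = 2 * (2::int)^(2*a+1)" using assms by (simp add: power_mult[symmetric] power_add mult.commute)
  have e: "DD n + DD (n-1) = 2 * Gs"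
    using Gsum_id[of m] m unfolding Gs_def by simp
  have "2 * (2::int)^(2*a+1) dvd 2 * Gs" using g by (rule mult_dvd_mono[OF dvd_refl])
  then show K2: "4 * (int n)^2 dvd DD n + DD (n-1)" unfolding e n2 .
  have "(int n)^2 dvd DD n - 1" using Kn assms(2) .
  then have "2 * (int n)^2 dvd 2 * (DD n - 1)" by (rule mult_dvd_mono[OF dvd_refl])
  moreover have "2 * (int n)^2 dvd DD n + DD (n-1)"
    using K2 by (rule dvd_trans[rotated]) simp
  ultimately have "2 * (int n)^2 dvd 2 * (DD n - 1) - (DD n + DD (n-1))" by (rule dvd_diff)
  then show "2 * (int n)^2 dvd DD n - DD (n-1) - 2" by (simp add: algebra_simps)
qed



lemma ring_id1:
  fixes K P Q R :: int
  shows "2*(3*(2*K+1)*P - (K+1)*Q - K*R) = 6*(2*K+1)*P - ((2*K+1+1)*Q + (2*K+1-1)*R)"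
  by (simp add: algebra_simps)

lemma ring_id2:
  fixes K P Q R :: int
  shows "2*(3*(2*K+1)*P + (K+1)*Q + K*R) = 6*(2*K+1)*P + ((2*K+1+1)*Q + (2*K+1-1)*R)"
  by (simp add: algebra_simps)

definition AA :: "nat \<Rightarrow> nat \<Rightarrow> int" where "AA v k = (2 * int k - 1)^(2*v)"

abbreviation ES :: "nat \<Rightarrow> int \<Rightarrow> int" where
  "ES v x \<equiv> (\<Sum>j=1..v. int (ecoef (2*v) j) * x^(2*(v-j)+1))"

lemma AA_facts: "AA v (k+1) = (2*int k+1)^(2*v)" "AA v (k+2) = (2*int k+1+2)^(2*v)" "AA v k = (2*int k+1-2)^(2*v)"
  by (simp_all add: AA_def algebra_simps)

lemma AAx:
  assumes "x = 2*int k+1"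
  shows "AA v (k+1) = x^(2*v)" "AA v (k+2) = (x+2)^(2*v)" "AA v k = (x-2)^(2*v)"
  using assms by (simp_all add: AA_def algebra_simps)

lemma term1:
  assumes "x = 2*int k+1"
  shows "3*x*AA v (k+1) - (int k+1)*AA v (k+2) - int k*AA v k = 2*x^(2*v+1) - 2*ES v x"
proof -
  have "2*(3*x*AA v (k+1) - (int k+1)*AA v (k+2) - int k*AA v k) = 6*x*AA v (k+1) - ((x+1)*AA v (k+2) + (x-1)*AA v k)"
    using ring_id1[of "int k" "AA v (k+1)" "AA v (k+2)" "AA v k"] unfolding assms .
  also have "\<dots> = 6*x*x^(2*v) - ((x+1)*(x+2)^(2*v) + (x-1)*(x-2)^(2*v))"
    by (simp only: AAx[OF assms])
  also have "\<dots> = 2*(2*x^(2*v+1) - 2*ES v x)"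
    unfolding e_identity by (simp add: algebra_simps)
  finally show ?thesis by simp
qed

lemma term2:
  assumes "x = 2*int k+1"
  shows "3*x*AA v (k+1) + (int k+1)*AA v (k+2) + int k*AA v k = 4*x^(2*v+1) + 2*ES v x"
proof -
  have "2*(3*x*AA v (k+1) + (int k+1)*AA v (k+2) + int k*AA v k) = 6*x*AA v (k+1) + ((x+1)*AA v (k+2) + (x-1)*AA v k)"
    using ring_id2[of "int k" "AA v (k+1)" "AA v (k+2)" "AA v k"] unfolding assms .
  also have "\<dots> = 6*x*x^(2*v) + ((x+1)*(x+2)^(2*v) + (x-1)*(x-2)^(2*v))"
    by (simp only: AAx[OF assms])
  also have "\<dots> = 2*(4*x^(2*v+1) + 2*ES v x)"
    unfolding e_identity by (simp add: algebra_simps)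
  finally show ?thesis by simp
qed

lemma d1:
  fixes X S D :: int
  shows "(2*X - 2*S) * D = 2*(X*D) - 2*(S*D)"
  by (simp add: algebra_simps)

lemma d2:
  fixes s X S D :: int
  shows "(-s) * (4*X + 2*S) * D = -(4*(s*X*D) + 2*(S*(s*D)))"
  by (simp add: algebra_simps)

definition SS :: "nat \<Rightarrow> nat \<Rightarrow> int" where
  "SS n w = (\<Sum>k<n. (2 * int k + 1) ^ (2*w+1) * DD k)"

definition TT :: "nat \<Rightarrow> nat \<Rightarrow> int" where
  "TT n w = (\<Sum>k<n. (-1) ^ k * (2 * int k + 1) ^ (2*w+1) * DD k)"

lemma swap_lemma:
  fixes c :: "nat \<Rightarrow> int" and f :: "nat \<Rightarrow> nat \<Rightarrow> int"
  shows "(\<Sum>k<n. (\<Sum>j=1..v. c j * f j k)) = (\<Sum>j=1..v. c j * (\<Sum>k<n. f j k))"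
  by (subst sum.swap) (simp add: sum_distrib_left)

lemma S_rel:
  assumes "n \<ge> 1"
  shows "2 * SS n v - 2 * (\<Sum>j=1..v. int (ecoef (2*v) j) * SS n (v-j))
         = int n * ((2 * int n - 1)^(2*v) * DD n - (2 * int n + 1)^(2*v) * DD (n-1))"
proof -
  obtain p where p: "n = Suc p" using assms by (cases n) auto
  have "(\<Sum>k<n. (3*(2*int k+1)*AA v (k+1) - (int k+1)*AA v (k+2) - int k*AA v k) * DD k)
        = (\<Sum>k<n. 2 * ((2*int k+1)^(2*v+1) * DD k) - 2 * (\<Sum>j=1..v. int (ecoef (2*v) j) * ((2*int k+1)^(2*(v-j)+1) * DD k)))"
  proof (rule sum.cong[OF refl])
    fix k
    have "(3*(2*int k+1)*AA v (k+1) - (int k+1)*AA v (k+2) - int k*AA v k) * DD k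
        = (2*(2*int k+1)^(2*v+1) - 2*ES v (2*int k+1)) * DD k" by (simp only: term1[OF refl])
    also have "\<dots> = 2 * ((2*int k+1)^(2*v+1) * DD k) - 2 * (ES v (2*int k+1) * DD k)" by (rule d1)
    also have "ES v (2*int k+1) * DD k = (\<Sum>j=1..v. int (ecoef (2*v) j) * ((2*int k+1)^(2*(v-j)+1) * DD k))"
      by (simp add: sum_distrib_right mult.assoc)
    finally show "(3*(2*int k+1)*AA v (k+1) - (int k+1)*AA v (k+2) - int k*AA v k) * DD k
        = 2 * ((2*int k+1)^(2*v+1) * DD k) - 2 * (\<Sum>j=1..v. int (ecoef (2*v) j) * ((2*int k+1)^(2*(v-j)+1) * DD k))" .
  qed
  also have "\<dots> = 2 * SS n v - 2 * (\<Sum>j=1..v. int (ecoef (2*v) j) * SS n (v-j))"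
    by (simp only: sum_subtractf sum_distrib_left[symmetric] swap_lemma SS_def)
  finally have l: "(\<Sum>k<n. (3*(2*int k+1)*AA v (k+1) - (int k+1)*AA v (k+2) - int k*AA v k) * DD k)
        = 2 * SS n v - 2 * (\<Sum>j=1..v. int (ecoef (2*v) j) * SS n (v-j))" .
  have "(\<Sum>k<n. (3*(2*int k+1)*AA v (k+1) - (int k+1)*AA v (k+2) - int k*AA v k) * DD k)
        = (int p + 1) * (AA v (p+1) * DD (p+1) - AA v (p+2) * DD p)"
    unfolding p by (rule tel1)
  also have "\<dots> = int n * ((2 * int n - 1)^(2*v) * DD n - (2 * int n + 1)^(2*v) * DD (n-1))"
    unfolding p AA_def by (simp add: algebra_simps)
  finally show ?thesis using l by simp
qed

lemma T_rel:
  assumes "n \<ge> 1" "even n"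
  shows "- (4 * TT n v + 2 * (\<Sum>j=1..v. int (ecoef (2*v) j) * TT n (v-j)))
         = int n * ((2 * int n - 1)^(2*v) * DD n + (2 * int n + 1)^(2*v) * DD (n-1))"
proof -
  obtain p where p: "n = Suc p" using assms by (cases n) auto
  have "(\<Sum>k<n. (-1)^(k+1) * (3*(2*int k+1)*AA v (k+1) + (int k+1)*AA v (k+2) + int k*AA v k) * DD k)
        = (\<Sum>k<n. - (4 * ((-1)^k * (2*int k+1)^(2*v+1) * DD k) + 2 * (\<Sum>j=1..v. int (ecoef (2*v) j) * ((-1)^k * (2*int k+1)^(2*(v-j)+1) * DD k))))"
  proof (rule sum.cong[OF refl])
    fix k
    have "(-1)^(k+1) * (3*(2*int k+1)*AA v (k+1) + (int k+1)*AA v (k+2) + int k*AA v k) * DD k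
        = (- ((-1)^k)) * (4*(2*int k+1)^(2*v+1) + 2*ES v (2*int k+1)) * DD k" by (simp only: term2[OF refl]) simp
    also have "\<dots> = - (4 * ((-1)^k * (2*int k+1)^(2*v+1) * DD k) + 2 * (ES v (2*int k+1) * ((-1)^k * DD k)))" by (rule d2)
    also have "ES v (2*int k+1) * ((-1)^k * DD k) = (\<Sum>j=1..v. int (ecoef (2*v) j) * ((-1)^k * (2*int k+1)^(2*(v-j)+1) * DD k))"
      by (simp only: sum_distrib_right) (simp add: mult_ac)
    finally show "(-1)^(k+1) * (3*(2*int k+1)*AA v (k+1) + (int k+1)*AA v (k+2) + int k*AA v k) * DD k
        = - (4 * ((-1)^k * (2*int k+1)^(2*v+1) * DD k) + 2 * (\<Sum>j=1..v. int (ecoef (2*v) j) * ((-1)^k * (2*int k+1)^(2*(v-j)+1) * DD k)))" .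
  qed
  also have "\<dots> = - (4 * TT n v + 2 * (\<Sum>j=1..v. int (ecoef (2*v) j) * TT n (v-j)))"
    by (simp only: sum_negf sum.distrib sum_distrib_left[symmetric] swap_lemma TT_def)
  finally have l: "(\<Sum>k<n. (-1)^(k+1) * (3*(2*int k+1)*AA v (k+1) + (int k+1)*AA v (k+2) + int k*AA v k) * DD k)
        = - (4 * TT n v + 2 * (\<Sum>j=1..v. int (ecoef (2*v) j) * TT n (v-j)))" .
  have "(\<Sum>k<n. (-1)^(k+1) * (3*(2*int k+1)*AA v (k+1) + (int k+1)*AA v (k+2) + int k*AA v k) * DD k)
        = (-1)^(p+1) * (int p + 1) * (AA v (p+1) * DD (p+1) + AA v (p+2) * DD p)"
    unfolding p by (rule tel2)
  also have "(-1::int)^(p+1) = 1" using assms(2) p by simp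
  also have "1 * (int p + 1) * (AA v (p+1) * DD (p+1) + AA v (p+2) * DD p)
      = int n * ((2 * int n - 1)^(2*v) * DD n + (2 * int n + 1)^(2*v) * DD (n-1))"
    unfolding p AA_def by (simp add: algebra_simps)
  finally show ?thesis using l by simp
qed



lemma part1:
  assumes "a \<ge> 1" "n = 2^a"
  shows "(int n)^3 dvd SS n v - ri v * int n"
proof (induction v rule: less_induct)
  case (less v)
  have n1: "n \<ge> 1" using assms by simp
  obtain c1 where c1: "(2*int n - 1)^(2*v) = 1 - 4*int v*int n + 4*(int n)^2*c1" using pw_minus by blast
  obtain c2 where c2: "(2*int n + 1)^(2*v) = 1 + 4*int v*int n + 4*(int n)^2*c2" using pw_plus by blast
  note K = K12[OF assms]
  define inner where "inner = (2*int n - 1)^(2*v)*DD n - (2*int n+1)^(2*v)*DD (n-1) - 2"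
  have ie: "inner = (DD n - DD (n-1) - 2) - (4*int v*int n)*(DD n + DD (n-1)) + (2*(int n)^2)*(2*(c1*DD n - c2*DD (n-1)))"
    unfolding inner_def c1 c2 by (simp add: algebra_simps)
  have d42: "2*(int n)^2 dvd 4*(int n)^2" by simp
  have "2*(int n)^2 dvd inner"
    unfolding ie
    by (intro dvd_add dvd_diff K(2) dvd_mult dvd_trans[OF d42 K(1)] dvd_triv_left)
  then obtain t where t: "inner = 2*(int n)^2*t" by (auto elim: dvdE)
  have "2*SS n v - 2*(\<Sum>j=1..v. int (ecoef (2*v) j) * SS n (v-j)) = int n * (inner + 2)"
    using S_rel[OF n1, of v] unfolding inner_def by simp
  then have "2*(SS n v - (\<Sum>j=1..v. int (ecoef (2*v) j) * SS n (v-j)) - int n) = 2*((int n)^3 * t)"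
    unfolding t by (simp add: algebra_simps power2_eq_square power3_eq_cube)
  then have "SS n v - (\<Sum>j=1..v. int (ecoef (2*v) j) * SS n (v-j)) - int n = (int n)^3 * t"
    by (metis mult_cancel_left zero_neq_numeral)
  then have A: "(int n)^3 dvd SS n v - (\<Sum>j=1..v. int (ecoef (2*v) j) * SS n (v-j)) - int n"
    unfolding dvd_def by blast
  have B: "(int n)^3 dvd (\<Sum>j=1..v. int (ecoef (2*v) j) * (SS n (v-j) - ri (v-j) * int n))"
  proof (intro dvd_sum dvd_mult)
    fix j assume "j \<in> {1..v}"
    then have "v - j < v" by auto
    then show "(int n)^3 dvd SS n (v-j) - ri (v-j) * int n" by (rule less.IH)
  qed
  have eq: "SS n v - ri v * int n = (SS n v - (\<Sum>j=1..v. int (ecoef (2*v) j) * SS n (v-j)) - int n)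
      + (\<Sum>j=1..v. int (ecoef (2*v) j) * (SS n (v-j) - ri (v-j) * int n))"
    by (subst ri_rec) (simp add: sum_subtractf right_diff_distrib sum_distrib_right sum_distrib_left algebra_simps)
  show ?case unfolding eq by (rule dvd_add[OF A B])
qed

lemma part2:
  assumes "a \<ge> 1" "n = 2^a"
  shows "(int n)^3 dvd TT n v - rti v * (int n)^2"
proof (induction v rule: less_induct)
  case (less v)
  have n1: "n \<ge> 1" using assms by simp
  have ev: "even n" using assms by simp
  obtain c1 where c1: "(2*int n - 1)^(2*v) = 1 - 4*int v*int n + 4*(int n)^2*c1" using pw_minus by blast
  obtain c2 where c2: "(2*int n + 1)^(2*v) = 1 + 4*int v*int n + 4*(int n)^2*c2" using pw_plus by blast
  note K = K12[OF assms]
  obtain u where u: "DD n - DD (n-1) - 2 = 2*(int n)^2*u" using K(2) by (auto elim: dvdE)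
  define inner where "inner = (2*int n - 1)^(2*v)*DD n + (2*int n+1)^(2*v)*DD (n-1) + 8*int v*int n"
  have ie: "inner = (DD n + DD (n-1)) - (4*(int n)^2)*(2*int v*int n*u) + (4*(int n)^2)*(c1*DD n + c2*DD (n-1))"
  proof -
    have "inner = (DD n + DD (n-1)) - 4*int v*int n*(DD n - DD (n-1) - 2) + (4*(int n)^2)*(c1*DD n + c2*DD (n-1))"
      unfolding inner_def c1 c2 by (simp add: algebra_simps)
    also have "\<dots> = (DD n + DD (n-1)) - (4*(int n)^2)*(2*int v*int n*u) + (4*(int n)^2)*(c1*DD n + c2*DD (n-1))"
      unfolding u by (simp add: algebra_simps)
    finally show ?thesis .
  qed
  have "4*(int n)^2 dvd inner"
    unfolding ie by (intro dvd_add dvd_diff K(1) dvd_triv_left)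
  then obtain t where t: "inner = 4*(int n)^2*t" by (auto elim: dvdE)
  have hs: "(\<Sum>j=1..v. int (ecoef (2*v) j) * TT n (v-j)) = 2 * (\<Sum>j=1..v. hh v j * TT n (v-j))"
    by (simp add: sum_distrib_left hh_eq mult.assoc)
  have "- (4 * TT n v + 2 * (\<Sum>j=1..v. int (ecoef (2*v) j) * TT n (v-j))) = int n * (inner - 8*int v*int n)"
    using T_rel[OF n1 ev, of v] unfolding inner_def by simp
  then have "4*(TT n v + (\<Sum>j=1..v. hh v j * TT n (v-j)) - 2*int v*(int n)^2) = 4*(- ((int n)^3 * t))"
    unfolding t hs by (simp add: algebra_simps power2_eq_square power3_eq_cube)
  then have "TT n v + (\<Sum>j=1..v. hh v j * TT n (v-j)) - 2*int v*(int n)^2 = - ((int n)^3 * t)"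
    by (metis mult_cancel_left zero_neq_numeral)
  then have A: "(int n)^3 dvd TT n v + (\<Sum>j=1..v. hh v j * TT n (v-j)) - 2*int v*(int n)^2"
    unfolding dvd_def by (rule_tac x="-t" in exI) simp
  have B: "(int n)^3 dvd (\<Sum>j=1..v. hh v j * (TT n (v-j) - rti (v-j) * (int n)^2))"
  proof (intro dvd_sum dvd_mult)
    fix j assume "j \<in> {1..v}"
    then have "v - j < v" by auto
    then show "(int n)^3 dvd TT n (v-j) - rti (v-j) * (int n)^2" by (rule less.IH)
  qed
  have eq: "TT n v - rti v * (int n)^2 = (TT n v + (\<Sum>j=1..v. hh v j * TT n (v-j)) - 2*int v*(int n)^2)
      - (\<Sum>j=1..v. hh v j * (TT n (v-j) - rti (v-j) * (int n)^2))"
    by (subst rti_rec) (simp add: sum_subtractf right_diff_distrib sum_distrib_right sum_distrib_left algebra_simps)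
  show ?case unfolding eq by (rule dvd_diff[OF A B])
qed

theorem theorem1p3:
  fixes v a n :: nat
  assumes "a \<ge> 1" and "n = 2 ^ a"
  shows "(\<exists>r::int. rho v = of_int r \<and> odd r \<and>
            (\<Sum>k<n. (2 * int k + 1) ^ (2*v+1) * int (delannoy k)) mod (int n ^ 3) = (r * int n) mod (int n ^ 3))
       \<and> (\<exists>r::int. rhot v = of_int r \<and> even r \<and>
            (\<Sum>k<n. (-1) ^ k * (2 * int k + 1) ^ (2*v+1) * int (delannoy k)) mod (int n ^ 3) = (r * int n ^ 2) mod (int n ^ 3))"
proof (intro conjI)
  show "\<exists>r::int. rho v = of_int r \<and> odd r \<and>
            (\<Sum>k<n. (2 * int k + 1) ^ (2*v+1) * int (delannoy k)) mod (int n ^ 3) = (r * int n) mod (int n ^ 3)"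
  proof (intro exI conjI)
    show "rho v = of_int (ri v)" by (rule rho_ri)
    show "odd (ri v)" by (rule odd_ri)
    show "(\<Sum>k<n. (2 * int k + 1) ^ (2*v+1) * int (delannoy k)) mod (int n ^ 3) = (ri v * int n) mod (int n ^ 3)"
      using part1[OF assms, of v] unfolding SS_def by (simp add: mod_eq_dvd_iff)
  qed
  show "\<exists>r::int. rhot v = of_int r \<and> even r \<and>
            (\<Sum>k<n. (-1) ^ k * (2 * int k + 1) ^ (2*v+1) * int (delannoy k)) mod (int n ^ 3) = (r * int n ^ 2) mod (int n ^ 3)"
  proof (intro exI conjI)
    show "rhot v = of_int (rti v)" by (rule rhot_rti)
    show "even (rti v)" by (rule even_rti)
    show "(\<Sum>k<n. (-1) ^ k * (2 * int k + 1) ^ (2*v+1) * int (delannoy k)) mod (int n ^ 3) = (rti v * int n ^ 2) mod (int n ^ 3)"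
      using part2[OF assms, of v] unfolding TT_def by (simp add: mod_eq_dvd_iff)
  qed
qed


end
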